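(* Let $N\ge 3$ and let $a_1,\dots,a_{2N}$, $x$ be real (or complex) numbers and $y\neq 0$. Let $G_N(x;a_1,\dots,a_{2N})$ be the determinant of the $N\times N$ matrix whose diagonal entries are $x+a_{2i-1}+a_{2i}$ ($1\le i\le N$), whose superdiagonal entries $(i,i+1)$ are $1$ ($1\le i\le N-1$), whose subdiagonal entries $(i+1,i)$ are $a_{2i}a_{2i+1}$ ($1\le i\le N-1$), whose $(1,N)$ entry is $(-1)^{N-1}a_1a_{2N}/y$, whose $(N,1)$ entry is $(-1)^{N-1}y$, and all of whose other entries are $0$. Then $$G_N(x;a_1,\dots,a_{2N}) = y+\frac{\prod_{i=1}^{2N}a_i}{y}+\sum_{k=0}^{N} e_k^{(N)}x^{N-k},$$ where $e_0^{(N)}=1$ and, for $1\le k\le N$, $$e_k^{(N)}=\sum_{\substack{1\le i_1\triangleleft i_2\triangleleft\cdots\triangleleft i_k\le 2N\\ (i_1,i_k)\neq(1,2N)}} a_{i_1}a_{i_2}\cdots a_{i_k}.$$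
   Context: For integers $i,j$, the notation $i\triangleleft j$ means $i+1<j$. The sum defining $e_k^{(N)}$ runs over all increasing index tuples $(i_1,\dots,i_k)$ with $1\le i_1$, $i_k\le 2N$, consecutive indices differing by at least $2$, and excluding tuples with $i_1=1$ and $i_k=2N$ simultaneously. *)

theory Defs
  imports Complex_Main "Jordan_Normal_Form.Determinant"
begin

text \<open>The N x N matrix of the statement, 0-indexed: entry (i,j) corresponds to the
paper's entry (i+1,j+1). The sequence a is indexed 1..2N as in the paper.\<close>
definition GN_matrix :: "nat \<Rightarrow> complex \<Rightarrow> complex \<Rightarrow> (nat \<Rightarrow> complex) \<Rightarrow> complex mat" where
  "GN_matrix N x y a = mat N N (\<lambda>(i,j).
     if i = 0 \<and> j = N - 1 then (-1)^(N-1) * a 1 * a (2*N) / y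
     else if i = N - 1 \<and> j = 0 then (-1)^(N-1) * y
     else if i = j then x + a (2*i+1) + a (2*i+2)
     else if j = i + 1 then 1
     else if i = j + 1 then a (2*j+2) * a (2*j+3)
     else 0)"

definition G_N :: "nat \<Rightarrow> complex \<Rightarrow> complex \<Rightarrow> (nat \<Rightarrow> complex) \<Rightarrow> complex" where
  "G_N N x y a = det (GN_matrix N x y a)"

definition e_idx :: "nat \<Rightarrow> nat \<Rightarrow> nat set set" where
  "e_idx N k = {S. S \<subseteq> {1..2*N} \<and> card S = k \<and>
      (\<forall>i\<in>S. \<forall>j\<in>S. i < j \<longrightarrow> i + 1 < j) \<and> \<not> (1 \<in> S \<and> 2*N \<in> S)}"

definition e_coef :: "nat \<Rightarrow> (nat \<Rightarrow> complex) \<Rightarrow> nat \<Rightarrow> complex" where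
  "e_coef N a k = (if k = 0 then 1 else \<Sum>S\<in>e_idx N k. \<Prod>i\<in>S. a i)"

end

theory Submission
  imports Defs
begin


lemma mat_delete_mat:
  "mat_delete (mat n n f) k l = mat (n-1) (n-1) (\<lambda>(i,j). f (if i < k then i else Suc i, if j < l then j else Suc j))"
  unfolding mat_delete_def by (rule eq_matI) auto

lemma det_row_lin:
  fixes f g h :: "nat \<times> nat \<Rightarrow> 'a::comm_ring_1"
  assumes k: "k < n"
    and o1: "\<And>i j. i < n \<Longrightarrow> j < n \<Longrightarrow> i \<noteq> k \<Longrightarrow> g (i,j) = f (i,j)"
    and o2: "\<And>i j. i < n \<Longrightarrow> j < n \<Longrightarrow> i \<noteq> k \<Longrightarrow> h (i,j) = f (i,j)"
    and r: "\<And>j. j < n \<Longrightarrow> f (k,j) = g (k,j) + h (k,j)"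
  shows "det (mat n n f) = det (mat n n g) + det (mat n n h)"
proof -
  have cg: "cofactor (mat n n g) k j = cofactor (mat n n f) k j" if "j < n" for j
    unfolding cofactor_def mat_delete_mat
    by (rule arg_cong[where f="\<lambda>A. _ * det A"], rule eq_matI) (use k in \<open>auto intro!: o1\<close>)
  have ch: "cofactor (mat n n h) k j = cofactor (mat n n f) k j" if "j < n" for j
    unfolding cofactor_def mat_delete_mat
    by (rule arg_cong[where f="\<lambda>A. _ * det A"], rule eq_matI) (use k in \<open>auto intro!: o2\<close>)
  have "det (mat n n f) = (\<Sum>j<n. mat n n f $$ (k,j) * cofactor (mat n n f) k j)"
    by (rule laplace_expansion_row[OF _ k]) auto
  also have "\<dots> = (\<Sum>j<n. mat n n g $$ (k,j) * cofactor (mat n n g) k j)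
      + (\<Sum>j<n. mat n n h $$ (k,j) * cofactor (mat n n h) k j)"
    unfolding sum.distrib[symmetric]
    by (rule sum.cong) (use k in \<open>auto simp: cg ch r distrib_right\<close>)
  also have "\<dots> = det (mat n n g) + det (mat n n h)"
    using laplace_expansion_row[OF _ k, of "mat n n g"] laplace_expansion_row[OF _ k, of "mat n n h"]
    by auto
  finally show ?thesis .
qed

lemma det_single_row:
  fixes f :: "nat \<times> nat \<Rightarrow> 'a::comm_ring_1"
  assumes k: "k < n" and l: "l < n"
    and z: "\<And>j. j < n \<Longrightarrow> j \<noteq> l \<Longrightarrow> f (k,j) = 0"
  shows "det (mat n n f) = f (k,l) * (-1)^(k+l) *
    det (mat (n-1) (n-1) (\<lambda>(i,j). f (if i < k then i else Suc i, if j < l then j else Suc j)))"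
proof -
  have "det (mat n n f) = (\<Sum>j<n. mat n n f $$ (k,j) * cofactor (mat n n f) k j)"
    by (rule laplace_expansion_row[OF _ k]) auto
  also have "\<dots> = (\<Sum>j<n. if j = l then f (k,l) * cofactor (mat n n f) k l else 0)"
    by (rule sum.cong) (use k z in auto)
  also have "\<dots> = f (k,l) * cofactor (mat n n f) k l" using l by simp
  finally show ?thesis unfolding cofactor_def mat_delete_mat by (simp add: mult.assoc)
qed

lemma det_single_col:
  fixes f :: "nat \<times> nat \<Rightarrow> 'a::comm_ring_1"
  assumes k: "k < n" and l: "l < n"
    and z: "\<And>i. i < n \<Longrightarrow> i \<noteq> k \<Longrightarrow> f (i,l) = 0"
  shows "det (mat n n f) = f (k,l) * (-1)^(k+l) *
    det (mat (n-1) (n-1) (\<lambda>(i,j). f (if i < k then i else Suc i, if j < l then j else Suc j)))"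
proof -
  have "det (mat n n f) = (\<Sum>i<n. mat n n f $$ (i,l) * cofactor (mat n n f) i l)"
    by (rule laplace_expansion_column[OF _ l]) auto
  also have "\<dots> = (\<Sum>i<n. if i = k then f (k,l) * cofactor (mat n n f) k l else 0)"
    by (rule sum.cong) (use l z in auto)
  also have "\<dots> = f (k,l) * cofactor (mat n n f) k l" using k by simp
  finally show ?thesis unfolding cofactor_def mat_delete_mat by (simp add: mult.assoc)
qed

lemma det_mat_cong:
  assumes "\<And>i j. i < n \<Longrightarrow> j < n \<Longrightarrow> f (i,j) = g (i,j)"
  shows "det (mat n n f) = det (mat n n g)"
  by (rule arg_cong[where f=det], rule eq_matI) (auto simp: assms)




definition tri :: "complex \<Rightarrow> (nat \<Rightarrow> complex) \<Rightarrow> nat \<times> nat \<Rightarrow> complex" where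
  "tri x a = (\<lambda>(i,j). if i = j then x + a (2*i+1) + a (2*i+2)
     else if j = i + 1 then 1 else if i = j + 1 then a (2*j+2) * a (2*j+3) else 0)"

lemma tri_diag[simp]: "tri x a (i,i) = x + a (2*i+1) + a (2*i+2)" by (simp add: tri_def)
lemma tri_sup[simp]: "tri x a (i,Suc i) = 1" by (simp add: tri_def)
lemma tri_sub[simp]: "tri x a (Suc j,j) = a (2*j+2) * a (2*j+3)" by (simp add: tri_def)
lemma tri_zero: "Suc i < j \<or> Suc j < i \<Longrightarrow> tri x a (i,j) = 0" by (auto simp add: tri_def)

lemma tri_rec:
  "det (mat (m+2) (m+2) (tri x a)) = (x + a (2*m+3) + a (2*m+4)) * det (mat (m+1) (m+1) (tri x a))
     - a (2*m+2) * a (2*m+3) * det (mat m m (tri x a))"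
proof -
  define g where "g = (\<lambda>(i,j). if i = m+1 \<and> j \<noteq> m+1 then 0 else tri x a (i,j))"
  define h where "h = (\<lambda>(i,j). if i = m+1 \<and> j \<noteq> m then 0 else tri x a (i,j))"
  have "det (mat (m+2) (m+2) (tri x a)) = det (mat (m+2) (m+2) g) + det (mat (m+2) (m+2) h)"
  proof (rule det_row_lin[where k="m+1"])
    fix j assume "j < m+2"
    then consider "j = m" | "j = m+1" | "j < m" by linarith
    then show "tri x a (m + 1, j) = g (m + 1, j) + h (m + 1, j)"
      by cases (auto simp: g_def h_def tri_zero)
  qed (auto simp: g_def h_def)
  moreover have "det (mat (m+2) (m+2) g) = (x + a (2*m+3) + a (2*m+4)) * det (mat (m+1) (m+1) (tri x a))"
  proof -
    have "det (mat (m+2) (m+2) g) = g (m+1,m+1) * (-1)^(m+1+(m+1)) *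
      det (mat (m+2-1) (m+2-1) (\<lambda>(i,j). g (if i < m+1 then i else Suc i, if j < m+1 then j else Suc j)))"
      by (rule det_single_row) (auto simp: g_def)
    also have "det (mat (m+2-1) (m+2-1) (\<lambda>(i,j). g (if i < m+1 then i else Suc i, if j < m+1 then j else Suc j)))
       = det (mat (m+1) (m+1) (tri x a))"
      by (simp, rule det_mat_cong) (auto simp: g_def)
    also have "g (m+1,m+1) = x + a (2*m+3) + a (2*m+4)" 
      by (simp add: g_def eval_nat_numeral)
    also have "(-1::complex)^(m+1+(m+1)) = 1" by (simp add: power_add flip: power_mult_distrib)
    finally show ?thesis by simp
  qed
  moreover have "det (mat (m+2) (m+2) h) = - (a (2*m+2) * a (2*m+3) * det (mat m m (tri x a)))"
  proof -
    have "det (mat (m+2) (m+2) h) = h (m+1,m) * (-1)^(m+1+m) *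
      det (mat (m+2-1) (m+2-1) (\<lambda>(i,j). h (if i < m+1 then i else Suc i, if j < m then j else Suc j)))"
      by (rule det_single_row) (auto simp: h_def)
    also have "det (mat (m+2-1) (m+2-1) (\<lambda>(i,j). h (if i < m+1 then i else Suc i, if j < m then j else Suc j)))
       = det (mat (m+1) (m+1) (\<lambda>(i,j). tri x a (i, if j < m then j else Suc j)))"
      by (simp, rule det_mat_cong) (auto simp: h_def)
    also have "\<dots> = (\<lambda>(i,j). tri x a (i, if j < m then j else Suc j)) (m,m) * (-1)^(m+m) *
      det (mat (m+1-1) (m+1-1) (\<lambda>(i,j). (\<lambda>(i,j). tri x a (i, if j < m then j else Suc j))
          (if i < m then i else Suc i, if j < m then j else Suc j)))"
      by (rule det_single_col) (auto simp: tri_zero)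
    also have "det (mat (m+1-1) (m+1-1) (\<lambda>(i,j). (\<lambda>(i,j). tri x a (i, if j < m then j else Suc j))
          (if i < m then i else Suc i, if j < m then j else Suc j))) = det (mat m m (tri x a))"
      by (simp, rule det_mat_cong) auto
    also have "h (m+1,m) = a (2*m+2) * a (2*m+3)" by (simp add: h_def)
    also have "(-1::complex)^(m+1+m) = -1" by (simp add: power_add flip: power_mult_distrib)
    also have "(-1::complex)^(m+m) = 1" by (simp add: power_add flip: power_mult_distrib)
    finally show ?thesis by simp
  qed
  ultimately show ?thesis by simp
qed



definition indep :: "nat \<Rightarrow> nat set set" where
  "indep n = {S. S \<subseteq> {1..n} \<and> (\<forall>i\<in>S. \<forall>j\<in>S. i < j \<longrightarrow> i + 1 < j)}"

definition GG :: "complex \<Rightarrow> (nat \<Rightarrow> complex) \<Rightarrow> nat \<Rightarrow> complex" where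
  "GG x a n = (\<Sum>S\<in>indep n. (\<Prod>i\<in>S. a i) * x ^ ((n+1) div 2 - card S))"

lemma finite_indep[simp]: "finite (indep n)"
  by (rule finite_subset[of _ "Pow {1..n}"]) (auto simp: indep_def)

lemma indep_fin: "S \<in> indep n \<Longrightarrow> finite S"
  unfolding indep_def using finite_subset by auto

lemma indep_0: "indep 0 = {{}}" by (auto simp: indep_def)
lemma indep_1: "indep (Suc 0) = {{},{1}}" by (auto simp: indep_def)

lemma indep_SS: "indep (Suc (Suc n)) = indep (Suc n) \<union> insert (Suc (Suc n)) ` indep n"
proof
  show "indep (Suc (Suc n)) \<subseteq> indep (Suc n) \<union> insert (Suc (Suc n)) ` indep n"
  proof
    fix S assume S: "S \<in> indep (Suc (Suc n))"
    show "S \<in> indep (Suc n) \<union> insert (Suc (Suc n)) ` indep n"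
    proof (cases "Suc (Suc n) \<in> S")
      case False
      then have "S \<in> indep (Suc n)" using S unfolding indep_def by (auto simp: subset_iff le_Suc_eq)
      then show ?thesis by simp
    next
      case True
      have "Suc n \<notin> S" using S True unfolding indep_def by force
      then have "S - {Suc (Suc n)} \<in> indep n" using S unfolding indep_def by (auto simp: subset_iff le_Suc_eq)
      moreover have "S = insert (Suc (Suc n)) (S - {Suc (Suc n)})" using True by auto
      ultimately show ?thesis by blast
    qed
  qed
next
  show "indep (Suc n) \<union> insert (Suc (Suc n)) ` indep n \<subseteq> indep (Suc (Suc n))"
    unfolding indep_def by (auto simp: subset_iff)
qed

lemma indep_card: "S \<in> indep n \<Longrightarrow> card S \<le> (n+1) div 2"
proof (induction n arbitrary: S rule: less_induct)
  case (less n)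
  show ?case
  proof (cases n)
    case 0 then show ?thesis using less.prems by (simp add: indep_0)
  next
    case (Suc n1)
    show ?thesis
    proof (cases n1)
      case 0 then have "S \<in> indep 1" using less.prems Suc by simp
      then show ?thesis using Suc \<open>n1 = 0\<close> by (auto simp: indep_1)
    next
      case (Suc n2)
      with \<open>n = Suc n1\<close> have n: "n = Suc (Suc n2)" by simp
      from less.prems[unfolded n indep_SS] show ?thesis
      proof
        assume "S \<in> indep (Suc n2)"
        then have "card S \<le> (Suc n2 + 1) div 2" using less.IH[of "Suc n2" S] n by simp
        then show ?thesis using n by simp
      next
        assume "S \<in> insert (Suc (Suc n2)) ` indep n2"
        then obtain T where T: "T \<in> indep n2" "S = insert (Suc (Suc n2)) T" by auto
        have "Suc (Suc n2) \<notin> T" using T(1) unfolding indep_def by auto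
        then have "card S = Suc (card T)" using T indep_fin by simp
        moreover have "card T \<le> (n2+1) div 2" using less.IH[of n2 T] n T by simp
        ultimately show ?thesis using n by simp
      qed
    qed
  qed
qed

lemma GG_SS_gen:
  "GG x a (Suc (Suc n)) = (\<Sum>S\<in>indep (Suc n). (\<Prod>i\<in>S. a i) * x ^ ((n+3) div 2 - card S))
     + a (Suc (Suc n)) * (\<Sum>S\<in>indep n. (\<Prod>i\<in>S. a i) * x ^ ((n+3) div 2 - Suc (card S)))"
proof -
  have disj: "indep (Suc n) \<inter> insert (Suc (Suc n)) ` indep n = {}"
    unfolding indep_def by auto
  have notin: "S \<in> indep n \<Longrightarrow> Suc (Suc n) \<notin> S" for S unfolding indep_def by auto
  have inj: "inj_on (insert (Suc (Suc n))) (indep n)"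
  proof (rule inj_onI)
    fix S T assume "S \<in> indep n" "T \<in> indep n" "insert (Suc (Suc n)) S = insert (Suc (Suc n)) T"
    then show "S = T" using notin by (metis insert_ident)
  qed
  let ?f = "\<lambda>S. (\<Prod>i\<in>S. a i) * x ^ ((n+3) div 2 - card S)"
  have "GG x a (Suc (Suc n)) = sum ?f (indep (Suc n) \<union> insert (Suc (Suc n)) ` indep n)"
    unfolding GG_def indep_SS by (simp add: eval_nat_numeral)
  also have "\<dots> = sum ?f (indep (Suc n)) + sum ?f (insert (Suc (Suc n)) ` indep n)"
    by (rule sum.union_disjoint) (use disj in auto)
  finally have "GG x a (Suc (Suc n)) = sum ?f (indep (Suc n)) + sum ?f (insert (Suc (Suc n)) ` indep n)" .
  also have "(\<Sum>S\<in>insert (Suc (Suc n)) ` indep n. (\<Prod>i\<in>S. a i) * x ^ ((n+3) div 2 - card S))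
     = (\<Sum>S\<in>indep n. (\<Prod>i\<in>insert (Suc (Suc n)) S. a i) * x ^ ((n+3) div 2 - card (insert (Suc (Suc n)) S)))"
    by (rule sum.reindex[OF inj, unfolded comp_def])
  also have "\<dots> = a (Suc (Suc n)) * (\<Sum>S\<in>indep n. (\<Prod>i\<in>S. a i) * x ^ ((n+3) div 2 - Suc (card S)))"
    unfolding sum_distrib_left
    by (rule sum.cong) (auto simp: notin indep_fin mult.assoc)
  finally show ?thesis .
qed

lemma GG_SS2:
  "GG x a (n+2) = (\<Sum>S\<in>indep (n+1). (\<Prod>i\<in>S. a i) * x ^ ((n+3) div 2 - card S))
     + a (n+2) * (\<Sum>S\<in>indep n. (\<Prod>i\<in>S. a i) * x ^ ((n+3) div 2 - Suc (card S)))"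
  using GG_SS_gen[of x a n] by simp

lemma GG_even: "GG x a (2*m+2) = GG x a (2*m+1) + a (2*m+2) * GG x a (2*m)"
proof -
  have s1: "(\<Sum>S\<in>indep (2*m+1). (\<Prod>i\<in>S. a i) * x ^ ((2*m+3) div 2 - card S)) = GG x a (2*m+1)"
    unfolding GG_def by (rule sum.cong) auto
  have s2: "(\<Sum>S\<in>indep (2*m). (\<Prod>i\<in>S. a i) * x ^ ((2*m+3) div 2 - Suc (card S))) = GG x a (2*m)"
    unfolding GG_def by (rule sum.cong) auto
  show ?thesis using GG_SS2[of x a "2*m"] s1 s2 by simp
qed

lemma GG_odd: "GG x a (2*m+3) = x * GG x a (2*m+2) + a (2*m+3) * GG x a (2*m+1)"
proof -
  have s1: "(\<Sum>S\<in>indep (2*m+2). (\<Prod>i\<in>S. a i) * x ^ ((2*m+4) div 2 - card S)) = x * GG x a (2*m+2)"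
    unfolding GG_def sum_distrib_left
  proof (rule sum.cong)
    fix S assume "S \<in> indep (2*m+2)"
    then have "card S \<le> m+1" using indep_card[of S "2*m+2"] by simp
    then have "(2 * m + 4) div 2 - card S = Suc ((2 * m + 2 + 1) div 2 - card S)" by simp
    then show "(\<Prod>i\<in>S. a i) * x ^ ((2 * m + 4) div 2 - card S) = x * ((\<Prod>i\<in>S. a i) * x ^ ((2 * m + 2 + 1) div 2 - card S))"
      by simp
  qed simp
  have s2: "(\<Sum>S\<in>indep (2*m+1). (\<Prod>i\<in>S. a i) * x ^ ((2*m+4) div 2 - Suc (card S))) = GG x a (2*m+1)"
    unfolding GG_def by (rule sum.cong) auto
  have e: "2*m+3 = (2*m+1)+2" "(2*m+1)+1 = 2*m+2" "2*m+1+3 = 2*m+4" by simp_all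
  show ?thesis unfolding e(1) GG_SS2 e(2) e(3) s1 s2 ..
qed

lemma GG_rec: "GG x a (2*m+4) = (x + a (2*m+3) + a (2*m+4)) * GG x a (2*m+2) - a (2*m+2) * a (2*m+3) * GG x a (2*m)"
proof -
  have ee: "2*(m+1)+2 = 2*m+4" "2*(m+1)+1 = 2*m+3" "2*(m+1) = 2*m+2" "2*m+2+2 = 2*m+4" "2*m+2+1 = 2*m+3" by simp_all
  have e1: "GG x a (2*m+4) = GG x a (2*m+3) + a (2*m+4) * GG x a (2*m+2)"
    using GG_even[of x a "m+1"] unfolding ee .
  have e2: "GG x a (2*m+1) = GG x a (2*m+2) - a (2*m+2) * GG x a (2*m)"
    using GG_even[of x a m] by simp
  show ?thesis unfolding e1 GG_odd e2 by (simp add: algebra_simps)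
qed

lemma GG_0: "GG x a 0 = 1" by (simp add: GG_def indep_0)
lemma GG_2: "GG x a 2 = x + a 1 + a 2"
proof -
  have "GG x a 1 = x + a 1" by (simp add: GG_def indep_1)
  then show ?thesis using GG_even[of x a 0] GG_0[of x a] by (simp add: numeral_2_eq_2)
qed

lemma det_tri_GG: "det (mat m m (tri x a)) = GG x a (2*m)"
proof (induction m rule: less_induct)
  case (less m)
  show ?case
  proof (cases m)
    case 0 then show ?thesis by (simp add: GG_0)
  next
    case (Suc m1)
    show ?thesis
    proof (cases m1)
      case 0
      have "det (mat 1 1 (tri x a)) = x + a 1 + a 2" by (subst det_single) (auto simp: numeral_2_eq_2)
      then show ?thesis using Suc 0 GG_2 by simp
    next
      case (Suc m2)
      with \<open>m = Suc m1\<close> have m: "m = m2 + 2" by simp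
      have i1: "det (mat (m2+1) (m2+1) (tri x a)) = GG x a (2*m2+2)" using less.IH[of "m2+1"] m by simp
      have i2: "det (mat m2 m2 (tri x a)) = GG x a (2*m2)" using less.IH[of "m2"] m by simp
      have "det (mat m m (tri x a)) = (x + a (2*m2+3) + a (2*m2+4)) * GG x a (2*m2+2)
        - a (2*m2+2) * a (2*m2+3) * GG x a (2*m2)"
        unfolding m tri_rec i1 i2 ..
      also have "\<dots> = GG x a (2*m2+4)" by (rule GG_rec[symmetric])
      also have "2*m2+4 = 2*m" using m by simp
      finally show ?thesis .
    qed
  qed
qed




lemma det_tri_up: "det (mat n n (\<lambda>(i,j). tri x a (Suc i, j))) = (\<Prod>i<n. a (2*i+2) * a (2*i+3))"
proof -
  have "det (mat n n (\<lambda>(i,j). tri x a (Suc i, j))) = prod_list (diag_mat (mat n n (\<lambda>(i,j). tri x a (Suc i, j))))"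
    by (rule det_upper_triangular) (auto simp: upper_triangular_def tri_zero)
  also have "\<dots> = (\<Prod>i<n. a (2*i+2) * a (2*i+3))"
    unfolding prod_list_diag_prod by (simp add: atLeast0LessThan)
  finally show ?thesis .
qed

lemma det_tri_low: "det (mat n n (\<lambda>(i,j). tri x a (i, Suc j))) = 1"
proof -
  have "det (mat n n (\<lambda>(i,j). tri x a (i, Suc j))) = prod_list (diag_mat (mat n n (\<lambda>(i,j). tri x a (i, Suc j))))"
    by (rule det_lower_triangular[of n]) (auto simp: tri_zero)
  also have "\<dots> = 1"
    unfolding prod_list_diag_prod by simp
  finally show ?thesis .
qed

lemma tri_shift: "tri x a (Suc i, Suc j) = tri x (\<lambda>k. a (k+2)) (i,j)"
  by (auto simp: tri_def algebra_simps)

lemma neg1_sq: "(-1::complex)^k * (-1)^k = 1"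
  by (simp flip: power_mult_distrib)

lemma rearr: "(g::complex) = p + q + (r + - (s::complex)) \<Longrightarrow> g = p + r + q - s"
  by (simp add: algebra_simps)

lemma cyc_det:
  fixes N :: nat and x y :: complex and a :: "nat \<Rightarrow> complex"
  assumes N: "N \<ge> 3" and y: "y \<noteq> 0"
  defines "u \<equiv> (-1)^(N-1) * a 1 * a (2*N) / y" and "v \<equiv> (-1)^(N-1) * y"
  shows "G_N N x y a = det (mat N N (tri x a)) + a 1 * a (2*N) * (\<Prod>i<N-1. a (2*i+2) * a (2*i+3)) / y + y
     - a 1 * a (2*N) * det (mat (N-2) (N-2) (tri x (\<lambda>k. a (k+2))))"
proof -
  define F where "F = (\<lambda>(i,j). if i = 0 \<and> j = N-1 then u else if i = N-1 \<and> j = 0 then v else tri x a (i,j))"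
  define X1 where "X1 = (\<lambda>(i,j). if i = N-1 \<and> j = 0 then v else tri x a (i,j))"
  define X2 where "X2 = (\<lambda>(i,j). if i = 0 then (if j = N-1 then u else 0) else if i = N-1 \<and> j = 0 then v else tri x a (i,j))"
  define A where "A = (\<lambda>(i,j). if i = 0 then (if j = N-1 then u else 0) else tri x a (i,j))"
  define B where "B = (\<lambda>(i,j). if i = N-1 then (if j = 0 then v else 0) else tri x a (i,j))"
  define C where "C = (\<lambda>(i,j). if i = 0 then (if j = N-1 then u else 0) else if i = N-1 then (if j = 0 then v else 0) else tri x a (i,j))"
  have z1: "tri x a (0, N-1) = 0" using N by (intro tri_zero) simp
  have z2: "tri x a (N-1, 0) = 0" using N by (intro tri_zero) simp
  have "G_N N x y a = det (mat N N F)"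
    unfolding G_N_def GN_matrix_def
    by (rule det_mat_cong) (auto simp: F_def u_def v_def tri_def)
  also have "\<dots> = det (mat N N X1) + det (mat N N X2)"
    by (rule det_row_lin[where k=0]) (use N z1 in \<open>auto simp: F_def X1_def X2_def\<close>)
  also have "det (mat N N X1) = det (mat N N (tri x a)) + det (mat N N B)"
    by (rule det_row_lin[where k="N-1"]) (use N z2 in \<open>auto simp: B_def X1_def\<close>)
  also have "det (mat N N X2) = det (mat N N A) + det (mat N N C)"
    by (rule det_row_lin[where k="N-1"]) (use N z2 in \<open>auto simp: A_def C_def X2_def\<close>)
  also have "det (mat N N A) = a 1 * a (2*N) * (\<Prod>i<N-1. a (2*i+2) * a (2*i+3)) / y"
  proof -
    have "det (mat N N A) = A (0, N-1) * (-1)^(0+(N-1)) *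
      det (mat (N-1) (N-1) (\<lambda>(i,j). A (if i < 0 then i else Suc i, if j < N-1 then j else Suc j)))"
      by (rule det_single_row) (use N in \<open>auto simp: A_def\<close>)
    also have "det (mat (N-1) (N-1) (\<lambda>(i,j). A (if i < 0 then i else Suc i, if j < N-1 then j else Suc j)))
      = det (mat (N-1) (N-1) (\<lambda>(i,j). tri x a (Suc i, j)))"
      by (rule det_mat_cong) (auto simp: A_def)
    also have "A (0, N-1) * (-1)^(0+(N-1)) = a 1 * a (2*N) / y"
      using neg1_sq[of "N-1"] by (simp add: A_def u_def)
    finally show ?thesis by (simp add: det_tri_up)
  qed
  also have "det (mat N N B) = y"
  proof -
    have "det (mat N N B) = B (N-1, 0) * (-1)^(N-1+0) *
      det (mat (N-1) (N-1) (\<lambda>(i,j). B (if i < N-1 then i else Suc i, if j < 0 then j else Suc j)))"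
      by (rule det_single_row) (use N in \<open>auto simp: B_def\<close>)
    also have "det (mat (N-1) (N-1) (\<lambda>(i,j). B (if i < N-1 then i else Suc i, if j < 0 then j else Suc j)))
      = det (mat (N-1) (N-1) (\<lambda>(i,j). tri x a (i, Suc j)))"
      by (rule det_mat_cong) (auto simp: B_def)
    also have "B (N-1, 0) * (-1)^(N-1+0) = y"
      using neg1_sq[of "N-1"] by (simp add: B_def v_def)
    finally show ?thesis by (simp add: det_tri_low)
  qed
  also have "det (mat N N C) = - (a 1 * a (2*N) * det (mat (N-2) (N-2) (tri x (\<lambda>k. a (k+2)))))"
  proof -
    define C1 where "C1 = (\<lambda>(i,j). if i = N-2 then (if j = 0 then v else 0) else tri x a (Suc i, j))"
    have "det (mat N N C) = C (0, N-1) * (-1)^(0+(N-1)) *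
      det (mat (N-1) (N-1) (\<lambda>(i,j). C (if i < 0 then i else Suc i, if j < N-1 then j else Suc j)))"
      by (rule det_single_row) (use N in \<open>auto simp: C_def\<close>)
    also have "det (mat (N-1) (N-1) (\<lambda>(i,j). C (if i < 0 then i else Suc i, if j < N-1 then j else Suc j)))
      = det (mat (N-1) (N-1) C1)"
      by (rule det_mat_cong) (use N in \<open>auto simp: C_def C1_def\<close>)
    also have "det (mat (N-1) (N-1) C1) = C1 (N-2, 0) * (-1)^(N-2+0) *
      det (mat (N-1-1) (N-1-1) (\<lambda>(i,j). C1 (if i < N-2 then i else Suc i, if j < 0 then j else Suc j)))"
      by (rule det_single_row) (use N in \<open>auto simp: C1_def\<close>)
    also have "det (mat (N-1-1) (N-1-1) (\<lambda>(i,j). C1 (if i < N-2 then i else Suc i, if j < 0 then j else Suc j)))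
      = det (mat (N-2) (N-2) (tri x (\<lambda>k. a (k+2))))"
    proof -
      have e: "N-1-1 = N-2" by simp
      show ?thesis unfolding e
      proof (rule det_mat_cong)
        fix i j assume "i < N-2" "j < N-2"
        then show "(\<lambda>(i,j). C1 (if i < N-2 then i else Suc i, if j < 0 then j else Suc j)) (i, j) = tri x (\<lambda>k. a (k+2)) (i, j)"
          unfolding C1_def using tri_shift[of x a i j] by simp
      qed
    qed
    also have "C (0, N-1) * (-1)^(0+(N-1)) = a 1 * a (2*N) / y"
      using neg1_sq[of "N-1"] by (simp add: C_def u_def)
    also have "C1 (N-2, 0) * (-1)^(N-2+0) = - y"
    proof -
      have e: "N-1 = Suc (N-2)" using N by simp
      have "(-1::complex)^(N-1) = - ((-1)^(N-2))" unfolding e by simp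
      then show ?thesis using neg1_sq[of "N-2"] by (simp add: C1_def v_def)
    qed
    finally show ?thesis using y by simp
  qed
  finally show ?thesis by (rule rearr)
qed




lemma prod_pairs: fixes m :: nat shows "(\<Prod>i<m. a (2*i+2) * a (2*i+3)) = (\<Prod>i\<in>{2..<2*m+2}. (a i :: complex))"
proof (induction m)
  case 0 then show ?case by simp
next
  case (Suc m)
  have e1: "2*Suc m+2 = Suc (2*m+3)" by simp
  have e2: "2*m+3 = Suc (2*m+2)" by simp
  have A: "(\<Prod>i\<in>{2..<2*Suc m+2}. a i) = (\<Prod>i\<in>{2..<2*m+3}. a i) * a (2*m+3)"
    unfolding e1 by (rule prod.atLeastLessThan_Suc) simp
  have B: "(\<Prod>i\<in>{2..<2*m+3}. a i) = (\<Prod>i\<in>{2..<2*m+2}. a i) * a (2*m+2)"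
    unfolding e2 by (rule prod.atLeastLessThan_Suc) simp
  show ?case by (simp only: prod.lessThan_Suc Suc.IH A B mult.assoc)
qed

lemma prod_all: fixes N :: nat assumes "N \<ge> 1"
  shows "(\<Prod>i=1..2*N. (a i :: complex)) = a 1 * a (2*N) * (\<Prod>i<N-1. a (2*i+2) * a (2*i+3))"
proof -
  have e: "2*(N-1)+2 = 2*N" using assms by simp
  have "(\<Prod>i=1..2*N. a i) = (\<Prod>i\<in>{1..<Suc (2*N)}. a i)" by (simp add: atLeastLessThanSuc_atLeastAtMost)
  also have "\<dots> = (\<Prod>i\<in>{1..<2*N}. a i) * a (2*N)" using assms by (simp add: prod.atLeastLessThan_Suc)
  also have "(\<Prod>i\<in>{1..<2*N}. a i) = a 1 * (\<Prod>i\<in>{2..<2*N}. a i)"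
    using assms by (subst prod.atLeast_Suc_lessThan) (auto simp: numeral_2_eq_2)
  finally show ?thesis unfolding prod_pairs e by (simp add: algebra_simps)
qed

lemma indep_mem: "S \<in> indep n \<Longrightarrow> i \<in> S \<Longrightarrow> 1 \<le> i \<and> i \<le> n"
  unfolding indep_def by auto

lemma indep_sep: "S \<in> indep n \<Longrightarrow> i \<in> S \<Longrightarrow> j \<in> S \<Longrightarrow> i < j \<Longrightarrow> i + 1 < j"
  unfolding indep_def by auto

lemma comb_inner:
  fixes N :: nat and x :: complex and a :: "nat \<Rightarrow> complex"
  assumes N: "N \<ge> 3"
  shows "(\<Sum>S\<in>{S\<in>indep (2*N). 1 \<in> S \<and> 2*N \<in> S}. (\<Prod>i\<in>S. a i) * x ^ (N - card S))
     = a 1 * a (2*N) * GG x (\<lambda>k. a (k+2)) (2*N-4)"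
proof -
  define Ei where "Ei = {S\<in>indep (2*N). 1 \<in> S \<and> 2*N \<in> S}"
  define jj where "jj = (\<lambda>S'. insert 1 (insert (2*N) ((\<lambda>k. k+2) ` S')))"
  define ii where "ii = (\<lambda>S. (\<lambda>k. k-2) ` (S - {1, 2*N}))"
  have "a 1 * a (2*N) * GG x (\<lambda>k. a (k+2)) (2*N-4)
     = (\<Sum>S'\<in>indep (2*N-4). a 1 * a (2*N) * ((\<Prod>i\<in>S'. a (i+2)) * x ^ ((2*N-4+1) div 2 - card S')))"
    unfolding GG_def sum_distrib_left ..
  also have "\<dots> = (\<Sum>S\<in>Ei. (\<Prod>i\<in>S. a i) * x ^ (N - card S))"
  proof (rule sum.reindex_bij_witness[where i=ii and j=jj])
    fix S' assume S': "S' \<in> indep (2*N-4)"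
    have m: "k \<in> S' \<Longrightarrow> 1 \<le> k \<and> k \<le> 2*N-4" for k using indep_mem[OF S'] .
    have fin: "finite S'" using S' indep_fin by blast
    have d: "jj S' - {1, 2*N} = (\<lambda>k. k+2) ` S'" unfolding jj_def using m N by force
    show "ii (jj S') = S'" unfolding ii_def d by (force simp: image_image)
    show "jj S' \<in> Ei"
      unfolding Ei_def jj_def indep_def
    proof (intro CollectI conjI ballI impI)
      show "insert 1 (insert (2 * N) ((\<lambda>k. k + 2) ` S')) \<subseteq> {1..2 * N}" using m N by force
    next
      fix i j assume "i \<in> insert 1 (insert (2 * N) ((\<lambda>k. k + 2) ` S'))"
        "j \<in> insert 1 (insert (2 * N) ((\<lambda>k. k + 2) ` S'))" "i < j"
      then show "i + 1 < j" using N indep_sep[OF S'] by (auto dest: m)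
    qed auto
    have n1: "1 \<notin> (\<lambda>k. k+2) ` S'" by auto
    have n2: "2*N \<notin> insert 1 ((\<lambda>k. k+2) ` S')" using m N by force
    have inj: "inj_on (\<lambda>k. k+2) S'" by (simp add: inj_on_def)
    have c: "card (jj S') = card S' + 2" unfolding jj_def using n1 n2 fin
      using card_image[OF inj] by (simp add: insert_commute)
    have p: "(\<Prod>i\<in>jj S'. a i) = a 1 * a (2*N) * (\<Prod>i\<in>S'. a (i+2))"
    proof -
      have "jj S' = insert (2*N) (insert 1 ((\<lambda>k. k+2) ` S'))" unfolding jj_def by auto
      moreover have "prod a ((\<lambda>k. k+2) ` S') = (\<Prod>i\<in>S'. a (i+2))"
        using prod.reindex[OF inj, of a] by (simp add: comp_def)
      ultimately show ?thesis using n1 n2 fin by (simp add: mult.assoc)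
    qed
    have ex: "N - card (jj S') = (2*N-4+1) div 2 - card S'" unfolding c using N by simp
    show "(\<Prod>i\<in>jj S'. a i) * x ^ (N - card (jj S')) =
        a 1 * a (2*N) * ((\<Prod>i\<in>S'. a (i+2)) * x ^ ((2*N-4+1) div 2 - card S'))"
      unfolding p ex by (simp add: mult.assoc)
  next
    fix S assume S: "S \<in> Ei"
    then have SI: "S \<in> indep (2*N)" and o1: "1 \<in> S" and o2: "2*N \<in> S" unfolding Ei_def by auto
    have m: "k \<in> S \<Longrightarrow> 1 \<le> k \<and> k \<le> 2*N" for k using indep_mem[OF SI] .
    have sep: "i \<in> S \<Longrightarrow> j \<in> S \<Longrightarrow> i < j \<Longrightarrow> i + 1 < j" for i j using indep_sep[OF SI] .
    have rng: "k \<in> S - {1, 2*N} \<Longrightarrow> 3 \<le> k \<and> k \<le> 2*N-2" for k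
    proof -
      assume k: "k \<in> S - {1, 2*N}"
      then have "1 \<le> k" "k \<le> 2*N" "k \<noteq> 1" "k \<noteq> 2*N" using m by auto
      moreover have "k \<noteq> 2" using sep[OF o1, of k] k by auto
      moreover have "k \<noteq> 2*N-1" using sep[of k "2*N"] o2 k N by auto
      ultimately show "3 \<le> k \<and> k \<le> 2*N-2" by auto
    qed
    have sh: "(\<lambda>k. k+2) ` ii S = S - {1, 2*N}"
    proof -
      have "(\<lambda>k. k - 2 + 2) ` (S - {1, 2*N}) = (\<lambda>k. k) ` (S - {1, 2*N})"
      proof (intro equalityI subsetI)
        fix z assume "z \<in> (\<lambda>k. k - 2 + 2) ` (S - {1, 2*N})"
        then obtain k where k: "k \<in> S - {1, 2*N}" "z = k - 2 + 2" by blast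
        have "3 \<le> k" using rng[OF k(1)] by simp
        then have "z = k" using k(2) by simp
        then show "z \<in> (\<lambda>k. k) ` (S - {1, 2*N})" using k(1) by simp
      next
        fix z assume z: "z \<in> (\<lambda>k. k) ` (S - {1, 2*N})"
        then have z': "z \<in> S - {1, 2*N}" by simp
        have "3 \<le> z" using rng[OF z'] by simp
        then have "z = z - 2 + 2" by simp
        then show "z \<in> (\<lambda>k. k - 2 + 2) ` (S - {1, 2*N})" using z' by (rule image_eqI)
      qed
      then show ?thesis unfolding ii_def image_image by simp
    qed
    show "jj (ii S) = S" unfolding jj_def sh using o1 o2 by auto
    show "ii S \<in> indep (2*N-4)"
      unfolding indep_def
    proof (intro CollectI conjI ballI impI)
      show "ii S \<subseteq> {1..2*N-4}" unfolding ii_def using rng by force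
    next
      fix i j assume "i \<in> ii S" "j \<in> ii S" "i < j"
      then obtain i' j' where ij: "i' \<in> S - {1, 2*N}" "j' \<in> S - {1, 2*N}" "i = i' - 2" "j = j' - 2"
        unfolding ii_def by auto
      have "3 \<le> i'" "3 \<le> j'" using rng[OF ij(1)] rng[OF ij(2)] by auto
      then have "i' < j'" using \<open>i < j\<close> ij(3,4) by linarith
      then have "i' + 1 < j'" using sep ij(1,2) by blast
      then show "i + 1 < j" using ij(3,4) \<open>3 \<le> i'\<close> by linarith
    qed
  qed
  finally show ?thesis unfolding Ei_def ..
qed




lemma comb_total:
  fixes N :: nat and x :: complex and a :: "nat \<Rightarrow> complex"
  assumes N: "N \<ge> 3"
  shows "(\<Sum>k=0..N. e_coef N a k * x ^ (N - k)) = GG x a (2*N) - a 1 * a (2*N) * GG x (\<lambda>k. a (k+2)) (2*N-4)"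
proof -
  define Ep where "Ep = {S\<in>indep (2*N). \<not> (1 \<in> S \<and> 2*N \<in> S)}"
  define Ei where "Ei = {S\<in>indep (2*N). 1 \<in> S \<and> 2*N \<in> S}"
  let ?f = "\<lambda>S. (\<Prod>i\<in>S. a i) * x ^ (N - card S)"
  have finEp: "finite Ep" unfolding Ep_def by simp
  have ec: "e_coef N a k = (\<Sum>S\<in>{S. S \<in> Ep \<and> card S = k}. \<Prod>i\<in>S. a i)" for k
  proof (cases "k = 0")
    case True
    have a1: "S = {}" if "S \<in> Ep" "card S = 0" for S
      using that indep_fin unfolding Ep_def by auto
    have a2: "{} \<in> Ep" unfolding Ep_def indep_def by auto
    have "{S. S \<in> Ep \<and> card S = k} = {{}}" using True a1 a2 by auto
    then show ?thesis using True by (simp add: e_coef_def)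
  next
    case False
    have "e_idx N k = {S. S \<in> Ep \<and> card S = k}" unfolding e_idx_def Ep_def indep_def by auto
    then show ?thesis using False by (simp add: e_coef_def)
  qed
  have "(\<Sum>k=0..N. e_coef N a k * x ^ (N - k)) = (\<Sum>k=0..N. \<Sum>S\<in>{S. S \<in> Ep \<and> card S = k}. ?f S)"
    unfolding ec sum_distrib_right by (rule sum.cong) auto
  also have "\<dots> = sum ?f Ep"
  proof (rule sum.group[OF finEp])
    show "card ` Ep \<subseteq> {0..N}" using indep_card[of _ "2*N"] by (auto simp: Ep_def)
  qed simp
  also have "sum ?f Ep = GG x a (2*N) - sum ?f Ei"
  proof -
    have "indep (2*N) = Ep \<union> Ei" unfolding Ep_def Ei_def by auto
    moreover have "Ep \<inter> Ei = {}" unfolding Ep_def Ei_def by auto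
    moreover have "finite Ei" unfolding Ei_def by simp
    ultimately have "sum ?f (indep (2*N)) = sum ?f Ep + sum ?f Ei"
      using finEp by (simp add: sum.union_disjoint)
    moreover have "GG x a (2*N) = sum ?f (indep (2*N))" unfolding GG_def by simp
    ultimately show ?thesis by simp
  qed
  also have "sum ?f Ei = a 1 * a (2*N) * GG x (\<lambda>k. a (k+2)) (2*N-4)"
    unfolding Ei_def by (rule comb_inner[OF N])
  finally show ?thesis .
qed

theorem mainTheorem1:
  fixes N :: nat and x y :: complex and a :: "nat \<Rightarrow> complex"
  assumes "N \<ge> 3" and "y \<noteq> 0"
  shows "G_N N x y a = y + (\<Prod>i=1..2*N. a i) / y + (\<Sum>k=0..N. e_coef N a k * x ^ (N - k))"
proof -
  have d1: "det (mat (N-2) (N-2) (tri x (\<lambda>k. a (k+2)))) = GG x (\<lambda>k. a (k+2)) (2*N-4)"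
  proof -
    have e: "2*(N-2) = 2*N-4" by simp
    show ?thesis unfolding det_tri_GG e ..
  qed
  have p: "(\<Prod>i=1..2*N. a i) = a 1 * a (2*N) * (\<Prod>i<N-1. a (2*i+2) * a (2*i+3))"
    using assms(1) by (intro prod_all) simp
  show ?thesis
    unfolding cyc_det[OF assms] det_tri_GG d1 comb_total[OF assms(1)] p
    by (simp add: algebra_simps)
qed


end
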